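(* Let $q$ be a prime power with $q\equiv1\pmod4$, let $n=q+1$, $n'=n/2$, $\ell=(n-2)/4$, and $P=\{-\ell,\dots,-1,0,1,\dots,\ell\}\subseteq\mathbb{Z}_n$. Let $\theta\in\mathbb{F}_{q^2}$ be a primitive $n$-th root of unity (used to define $f_P$ and $C_P$). Then $P$ is $\mu_q$-invariant, and (i) $C_P\subseteq R_n$ is an iso-self-dual cyclic code, with $\varphi_{-1,n'}(C_P)=C_P^\perp$; (ii) $C_P$ is the alternant code obtained by restricting to $\mathbb{F}_q$ the generalized Reed–Solomon code $\{(a(1),\theta^{\ell}a(\theta^{-1}),\dots,\theta^{(n-1)\ell}a(\theta^{-(n-1)})) : a(X)\in\mathbb{F}_{q^2}[X],\ \deg a(X)<n'\}$ over $\mathbb{F}_{q^2}$, i.e. $C_P$ is the set of codewords of that code with all coordinates in $\mathbb{F}_q$; in particular $C_P$ is a $[q+1,\frac{q+1}{2},\frac{q+3}{2}]$ MDS code over $\mathbb{F}_q$.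
   Context: $\mathbb{Z}_n=\mathbb{Z}/n\mathbb{Z}$. $R_n=\mathbb{F}_q[X]/\langle X^n-1\rangle$, elements identified with representatives $a_0+\dots+a_{n-1}X^{n-1}$ and words $(a_0,\dots,a_{n-1})\in\mathbb{F}_q^n$; cyclic codes are ideals of $R_n$; $C^\perp$ is the Euclidean dual. $\mu_q:\mathbb{Z}_n\to\mathbb{Z}_n$, $i\mapsto qi\bmod n$; $P$ is $\mu_q$-invariant if $\mu_q(P)=P$. For $\mu_q$-invariant $P$, $f_P(X)=\prod_{i\in P}(X-\theta^i)\in\mathbb{F}_q[X]$ and $C_P$ is the ideal of $R_n$ generated by $(X^n-1)/f_P(X)$ (the cyclic code with check polynomial $f_P$). For $s\in\mathbb{Z}_n^*$, $t\in\mathbb{Z}_n$ with $qt\equiv t\pmod n$, $\varphi_{s,t}:R_n\to R_n$, $a(X)\mapsto a(\theta^{-t}X^{s^{-1}})\bmod(X^n-1)$ with $s^{-1}$ a positive integer, $ss^{-1}\equiv1\pmod n$. A cyclic code $C$ is iso-self-dual if $\varphi_{s,t}(C)=C^\perp$ for some such $s,t$. *)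

theory Defs
  imports "HOL-Computational_Algebra.Polynomial" "HOL-Computational_Algebra.Primes"
begin

text \<open>The ambient field 'a plays the role of F_{q^2}; F_q is its subfield {x. x^q = x}.\<close>
definition Fq :: "nat \<Rightarrow> 'a::field set" where
  "Fq q = {x. x ^ q = x}"

definition over_Fq :: "nat \<Rightarrow> 'a::field poly \<Rightarrow> bool" where
  "over_Fq q p = (\<forall>i. coeff p i \<in> Fq q)"

text \<open>R_n: reduced representatives a_0 + ... + a_{n-1} X^{n-1} with coefficients in F_q.\<close>
definition Rn :: "nat \<Rightarrow> nat \<Rightarrow> 'a::field poly set" where
  "Rn q n = {p. over_Fq q p \<and> degree p < n}"

definition xn1 :: "nat \<Rightarrow> 'a::field poly" where
  "xn1 n = monom 1 n - 1"

text \<open>Subsets of Z_n are represented by sets of representatives in {0..<n}.\<close>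
definition mu_invariant :: "nat \<Rightarrow> nat \<Rightarrow> nat set \<Rightarrow> bool" where
  "mu_invariant q n P = ((\<lambda>i. (q * i) mod n) ` P = P)"

definition fP :: "'a::field \<Rightarrow> nat set \<Rightarrow> 'a poly" where
  "fP \<theta> P = (\<Prod>i\<in>P. [:- (\<theta> ^ i), 1:])"

definition CP :: "nat \<Rightarrow> nat \<Rightarrow> 'a::field \<Rightarrow> nat set \<Rightarrow> 'a poly set" where
  "CP q n \<theta> P = {(a * (xn1 n div fP \<theta> P)) mod xn1 n | a. over_Fq q a}"

definition dual :: "nat \<Rightarrow> nat \<Rightarrow> 'a::field poly set \<Rightarrow> 'a poly set" where
  "dual q n C = {v \<in> Rn q n. \<forall>c\<in>C. (\<Sum>i<n. coeff c i * coeff v i) = 0}"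

text \<open>phi_{s,t} with k = s^{-1} a positive integer: a(X) |-> a(theta^{-t} X^k) mod (X^n - 1).\<close>
definition phi :: "nat \<Rightarrow> 'a::field \<Rightarrow> nat \<Rightarrow> nat \<Rightarrow> 'a poly \<Rightarrow> 'a poly" where
  "phi n \<theta> k t a = pcompose a (monom (inverse (\<theta> ^ t)) k) mod xn1 n"

text \<open>s ranges over Z_n^*, equivalently its inverse k ranges over positive integers coprime to n.\<close>
definition iso_self_dual :: "nat \<Rightarrow> nat \<Rightarrow> 'a::field \<Rightarrow> 'a poly set \<Rightarrow> bool" where
  "iso_self_dual q n \<theta> C =
    (\<exists>k t. 0 < k \<and> coprime k n \<and> t < n \<and> (q * t) mod n = t mod n \<and>
           phi n \<theta> k t ` C = dual q n C)"

definition weight :: "nat \<Rightarrow> 'a::zero poly \<Rightarrow> nat" where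
  "weight n c = card {i. i < n \<and> coeff c i \<noteq> 0}"

end

theory Submission
  imports Defs "HOL-Library.FuncSet"
begin


locale cset =
  fixes q :: nat and \<theta> :: "'a::{field,finite}" and p m l n k :: nat
  assumes pm: "prime p" "0 < m" "q = p ^ m"
    and card: "card (UNIV :: 'a set) = q ^ 2"
    and ql: "q = 4 * l + 1" and nl: "n = 4 * l + 2" and kl: "k = 2 * l + 1"
    and th1: "\<theta> ^ n = 1"
    and prim: "\<And>j. 0 < j \<Longrightarrow> j < n \<Longrightarrow> \<theta> ^ j \<noteq> 1"
begin

lemma card_zero: "of_nat (card (UNIV :: 'a set)) = (0::'a)"
proof -
  have "(\<Sum>y\<in>(UNIV::'a set). 1 + y) = (\<Sum>y\<in>UNIV. y)"
    by (rule sum.reindex_bij_witness[of _ "\<lambda>y. y - 1" "\<lambda>y. 1 + y"]) auto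
  thus ?thesis by (simp add: sum.distrib)
qed

lemma CHAR_dvd_CARD': "CHAR('a) dvd card (UNIV :: 'a set)"
  using card_zero by (simp only: of_nat_eq_0_iff_char_dvd)

lemma CHAR_eq: "CHAR('a) = p"
proof -
  have fin: "finite (UNIV :: 'a set)" by simp
  have "CHAR('a) > 0" using finite_imp_CHAR_pos[OF fin] .
  hence pr: "prime CHAR('a)" using prime_CHAR_semidom by blast
  have "CHAR('a) dvd p ^ (2*m)" using CHAR_dvd_CARD' card pm
    by (simp add: power_mult[symmetric] mult.commute)
  hence "CHAR('a) dvd p" using pr prime_dvd_power by blast
  thus ?thesis using pr pm(1) primes_dvd_imp_eq by blast
qed

lemma CHAR_facts: "prime CHAR('a)" "q = CHAR('a) ^ m"
  using CHAR_eq pm by auto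

lemma frob_add: "(x + y :: 'a) ^ q = x ^ q + y ^ q"
  by (rule freshmans_dream'[OF CHAR_facts])

lemma frob_sum: "(sum (f :: 'b \<Rightarrow> 'a) A) ^ q = sum (\<lambda>i. f i ^ q) A"
  by (rule freshmans_dream_sum'[OF CHAR_facts])

lemma q_odd: "odd q" using ql by simp

lemma frob_minus: "(- x :: 'a) ^ q = - (x ^ q)"
  by (rule power_minus_odd[OF q_odd])

lemma frob_diff: "(x - y :: 'a) ^ q = x ^ q - y ^ q"
  using frob_add[of x "-y"] frob_minus[of y] by simp

lemma of_nat_q: "of_nat q = (0::'a)"
proof -
  have "CHAR('a) dvd CHAR('a) ^ m" using pm(2) by (simp add: dvd_power)
  hence "CHAR('a) dvd q" using CHAR_facts(2) by metis
  thus ?thesis by (simp only: of_nat_eq_0_iff_char_dvd)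
qed

lemma n_q: "n = q + 1" using ql nl by simp

lemma of_nat_n: "of_nat n = (1::'a)"
  unfolding n_q of_nat_add using of_nat_q by simp

lemma pow_card: "(x::'a) ^ (q^2) = x"
proof (cases "x = 0")
  case False
  have "x * (\<Prod>y\<in>UNIV-{0}. x * y) = x * x ^ (card (UNIV :: 'a set) - 1) * \<Prod>(UNIV-{0})"
    by (simp add: prod.distrib mult_ac)
  also have "x * x ^ (card (UNIV :: 'a set) - 1) = x ^ Suc (card (UNIV :: 'a set) - 1)"
    by (subst power_Suc) auto
  also have "Suc (card (UNIV :: 'a set) - 1) = card (UNIV :: 'a set)"
    using finite_UNIV_card_ge_0[where ?'a = 'a] by simp
  also have "(\<Prod>y\<in>UNIV-{0}. x * y) = (\<Prod>y\<in>UNIV-{0}. y)"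
    by (rule prod.reindex_bij_witness[of _ "\<lambda>y. y / x" "\<lambda>y. x * y"]) (use False in auto)
  finally have "x * \<Prod>(UNIV-{0::'a}) = x ^ card (UNIV :: 'a set) * \<Prod>(UNIV-{0::'a})" .
  moreover have "\<Prod>(UNIV-{0::'a}) \<noteq> 0" by (subst prod_zero_iff) auto
  ultimately have "x = x ^ card (UNIV :: 'a set)" by (metis mult_right_cancel)
  thus ?thesis using card by metis
qed (use ql in \<open>simp add: power_0_left\<close>)

lemma th0: "\<theta> \<noteq> 0"
  using th1 nl by (metis power_0_left zero_neq_one add_2_eq_Suc' nat.distinct(1))

definition w :: "int \<Rightarrow> 'a" where "w i = \<theta> powi i"

lemma w_add: "w (a + b) = w a * w b"
  unfolding w_def using th0 by (simp add: power_int_add)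

lemma w_nat: "w (int j) = \<theta> ^ j"
  unfolding w_def by simp

lemma w_ne0: "w a \<noteq> 0"
  unfolding w_def using th0 by simp

lemma w_n: "w (int n * t) = 1"
  unfolding w_def by (simp add: power_int_mult th1)

lemma w_mod: "w a = w (a mod int n)"
proof -
  have "a = a mod int n + int n * (a div int n)" by simp
  hence "w a = w (a mod int n + int n * (a div int n))" by metis
  also have "\<dots> = w (a mod int n)" by (simp only: w_add w_n mult_1_right)
  finally show ?thesis .
qed

lemma n_pos: "n > 0" using nl by simp

lemma w_eq1: "w a = 1 \<longleftrightarrow> int n dvd a"
proof
  assume h: "w a = 1"
  define r where "r = nat (a mod int n)"
  have r: "int r = a mod int n" unfolding r_def using n_pos by simp
  have rn: "r < n" unfolding r_def using n_pos by (simp add: nat_less_iff)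
  have "\<theta> ^ r = 1" using h w_mod[of a] by (simp add: r[symmetric] w_nat)
  hence "r = 0" using prim[of r] rn by (cases "r = 0") auto
  thus "int n dvd a" using r by (simp add: dvd_eq_mod_eq_0)
next
  assume "int n dvd a"
  then obtain t where "a = int n * t" by (auto simp: dvd_def)
  thus "w a = 1" by (simp add: w_n)
qed

lemma w_eq: "w a = w b \<longleftrightarrow> int n dvd (a - b)"
proof -
  have "w a = w (a - b) * w b" by (simp add: w_add[symmetric])
  hence "w a = w b \<longleftrightarrow> w (a - b) = 1" using w_ne0[of b] by auto
  thus ?thesis by (simp add: w_eq1)
qed

lemma w_pow: "w a ^ j = w (a * int j)"
  unfolding w_def by (simp add: power_int_mult)

lemma w_minus: "w (- a) = inverse (w a)"
  unfolding w_def by (simp add: power_int_minus)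

lemma w_frob: "w a ^ q = w (- a)"
proof -
  have "w a ^ q = w (a * int q)" by (rule w_pow)
  also have "\<dots> = w (- a)" unfolding w_eq
  proof -
    have "a * int q - - a = int n * a" using n_q by (simp add: algebra_simps)
    thus "int n dvd a * int q - - a" by simp
  qed
  finally show ?thesis .
qed

lemma w_k: "w (int k) = -1"
proof -
  have "w (int k) ^ 2 = w (int n)" unfolding w_pow using kl nl by simp
  also have "\<dots> = 1" using w_n[of 1] by simp
  finally have "w (int k) ^ 2 = 1" .
  moreover have "w (int k) \<noteq> 1" unfolding w_nat using prim[of k] kl nl by simp
  ultimately show ?thesis by (simp add: power2_eq_1_iff)
qed

lemma sum_w: "(\<Sum>j<n. w (t * int j)) = (if int n dvd t then of_nat n else 0)"
proof (cases "int n dvd t")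
  case True
  hence "w t = 1" by (simp add: w_eq1)
  hence "w (t * int j) = 1" for j using w_pow[of t j] by simp
  thus ?thesis using True by simp
next
  case False
  hence ne: "w t \<noteq> 1" by (simp add: w_eq1)
  have "(\<Sum>j<n. w (t * int j)) = (\<Sum>j<n. w t ^ j)" by (simp add: w_pow)
  also have "\<dots> = (w t ^ n - 1) / (w t - 1)" by (rule geometric_sum[OF ne])
  also have "w t ^ n = 1" unfolding w_pow by (simp add: w_eq1)
  finally show ?thesis using False by simp
qed

lemma sum_w_shift: "(\<Sum>s\<in>{a..<a + int n}. f s) = (\<Sum>j<n. f (a + int j))"
  by (rule sum.reindex_bij_witness[of _ "\<lambda>j. a + int j" "\<lambda>s. nat (s - a)"]) auto

lemma sum_w_int: "(\<Sum>s\<in>{a..<a + int n}. w (s * t)) = (if int n dvd t then of_nat n else 0)"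
proof -
  have "(\<Sum>s\<in>{a..<a + int n}. w (s * t)) = (\<Sum>j<n. w ((a + int j) * t))" by (rule sum_w_shift)
  also have "\<dots> = (\<Sum>j<n. w (a * t) * w (t * int j))" by (simp add: w_add[symmetric] algebra_simps)
  also have "\<dots> = w (a * t) * (\<Sum>j<n. w (t * int j))" by (simp add: sum_distrib_left)
  also have "\<dots> = (if int n dvd t then w (a * t) * of_nat n else 0)" by (simp add: sum_w)
  also have "\<dots> = (if int n dvd t then of_nat n else 0)"
    by (auto simp: w_eq1)
  finally show ?thesis .
qed

end

context cset begin

definition fr :: "'a poly \<Rightarrow> 'a poly" where "fr u = map_poly (\<lambda>x. x ^ q) u"

lemma q_pos: "q > 0" using ql by simp

lemma coeff_fr: "coeff (fr u) i = coeff u i ^ q"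
  unfolding fr_def using q_pos by (simp add: coeff_map_poly)

lemma over_iff: "over_Fq q u \<longleftrightarrow> fr u = u"
  unfolding over_Fq_def Fq_def by (auto simp: poly_eq_iff coeff_fr)

lemma fr_add: "fr (a + b) = fr a + fr b"
  by (rule poly_eqI) (simp add: coeff_fr frob_add)

lemma fr_diff: "fr (a - b) = fr a - fr b"
  by (rule poly_eqI) (simp add: coeff_fr frob_diff)

lemma fr_mult: "fr (a * b) = fr a * fr b"
  by (rule poly_eqI) (simp add: coeff_fr coeff_mult frob_sum power_mult_distrib)

lemma fr_const: "fr [:c:] = [:c ^ q:]"
  by (rule poly_eqI) (simp add: coeff_fr q_pos coeff_pCons split: nat.split)

lemma fr_monom: "fr (monom c j) = monom (c ^ q) j"
  by (rule poly_eqI) (simp add: coeff_fr q_pos coeff_monom)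

lemma fr_pCons: "fr (pCons a u) = pCons (a ^ q) (fr u)"
  by (rule poly_eqI) (simp add: coeff_fr q_pos coeff_pCons split: nat.split)

lemma fr_0: "fr 0 = 0" by (simp add: fr_def)
lemma fr_1: "fr 1 = 1" by (simp add: fr_def)

lemma fr_sum: "fr (sum f A) = sum (\<lambda>i. fr (f i)) A"
  by (induction A rule: infinite_finite_induct) (auto simp: fr_add fr_0)

lemma fr_prod: "fr (prod f A) = prod (\<lambda>i. fr (f i)) A"
  by (induction A rule: infinite_finite_induct) (auto simp: fr_mult fr_1)

lemma fr_nz: "x \<noteq> 0 \<Longrightarrow> (x::'a) ^ q \<noteq> 0" by simp

lemma degree_fr: "degree (fr u) = degree u"
  unfolding fr_def by (rule degree_map_poly) simp

lemma Fq_iff: "x \<in> Fq q \<longleftrightarrow> x ^ q = x" unfolding Fq_def by simp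

lemma over_add: "over_Fq q (a::'a poly) \<Longrightarrow> over_Fq q b \<Longrightarrow> over_Fq q (a + b)"
proof -
  assume "over_Fq q a" "over_Fq q b"
  hence "fr a = a" "fr b = b" by (simp_all only: over_iff)
  thus ?thesis by (simp only: over_iff fr_add)
qed
lemma over_diff: "over_Fq q (a::'a poly) \<Longrightarrow> over_Fq q b \<Longrightarrow> over_Fq q (a - b)"
proof -
  assume "over_Fq q a" "over_Fq q b"
  hence "fr a = a" "fr b = b" by (simp_all only: over_iff)
  thus ?thesis by (simp only: over_iff fr_diff)
qed
lemma over_mult: "over_Fq q (a::'a poly) \<Longrightarrow> over_Fq q b \<Longrightarrow> over_Fq q (a * b)"
proof -
  assume "over_Fq q a" "over_Fq q b"
  hence "fr a = a" "fr b = b" by (simp_all only: over_iff)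
  thus ?thesis by (simp only: over_iff fr_mult)
qed
lemma over_const: "(c::'a) ^ q = c \<Longrightarrow> over_Fq q [:c:]"
  by (simp only: over_iff fr_const)
lemma over_monom: "(c::'a) ^ q = c \<Longrightarrow> over_Fq q (monom c j)"
  by (simp only: over_iff fr_monom)
lemma over_0: "over_Fq q (0::'a poly)" using over_const[of 0] q_pos by simp
lemma over_1: "over_Fq q (1::'a poly)" using over_const[of 1] by (simp add: one_pCons)

lemma over_sum: "(\<And>i. i \<in> A \<Longrightarrow> over_Fq q (f i :: 'a poly)) \<Longrightarrow> over_Fq q (sum f A)"
  unfolding over_iff fr_sum by simp

lemma over_prod: "(\<And>i. i \<in> A \<Longrightarrow> over_Fq q (f i :: 'a poly)) \<Longrightarrow> over_Fq q (prod f A)"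
  unfolding over_iff fr_prod by simp

lemma over_pcompose: "over_Fq q (u::'a poly) \<Longrightarrow> over_Fq q r \<Longrightarrow> over_Fq q (pcompose u r)"
proof (induction u rule: pCons_induct)
  case 0
  then show ?case by (simp add: over_0)
next
  case (pCons a u)
  from pCons.prems(1) have "a ^ q = a" "fr u = u"
    by (auto simp: over_iff fr_pCons)
  hence "over_Fq q u" by (simp add: over_iff)
  hence "over_Fq q (pcompose u r)" using pCons.IH pCons.prems by blast
  thus ?case unfolding pcompose_pCons using \<open>a ^ q = a\<close> pCons.prems
    by (intro over_add over_mult over_const) auto
qed

lemma over_divmod:
  assumes "over_Fq q (x::'a poly)" "over_Fq q y"
  shows "over_Fq q (x div y) \<and> over_Fq q (x mod y)"
proof -
  have fx: "fr x = x" and fy: "fr y = y" using assms by (auto simp: over_iff)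
  have "(x div y, x mod y) = (fr (x div y), fr (x mod y))"
  proof (induction rule: euclidean_relation_polyI)
    case by0
    then show ?case using fx by (simp add: fr_def)
  next
    case divides
    hence "x mod y = 0" by simp
    moreover have "x = x div y * y" using divides by simp
    hence "fr x = fr (x div y) * fr y" by (metis fr_mult)
    ultimately show ?case using fx fy by (simp add: fr_def)
  next
    case euclidean_relation
    have "x = x div y * y + x mod y" by simp
    hence "fr x = fr (x div y) * fr y + fr (x mod y)" by (metis fr_mult fr_add)
    moreover have "degree (x mod y) < degree y"
      using euclidean_relation by (simp add: degree_mod_less_degree)
    ultimately show ?case using fx fy by (simp add: degree_fr)
  qed
  thus ?thesis by (simp add: over_iff)
qed

lemma poly_frob: "over_Fq q (v::'a poly) \<Longrightarrow> poly v x ^ q = poly v (x ^ q)"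
proof -
  assume "over_Fq q v"
  hence c: "coeff v i ^ q = coeff v i" for i by (auto simp: over_Fq_def Fq_def)
  have t: "(coeff v i * x ^ i) ^ q = coeff v i * (x ^ q) ^ i" for i
    by (simp add: power_mult_distrib c power_mult[symmetric] mult.commute)
  show ?thesis unfolding poly_altdef frob_sum t ..
qed

lemma poly_sum_n: "degree (c::'a poly) < N \<Longrightarrow> poly c x = (\<Sum>j<N. coeff c j * x ^ j)"
proof -
  assume d: "degree c < N"
  have "poly c x = (\<Sum>i\<le>degree c. coeff c i * x ^ i)" by (rule poly_altdef)
  also have "\<dots> = (\<Sum>j<N. coeff c j * x ^ j)"
    by (rule sum.mono_neutral_left) (use d in \<open>auto simp: coeff_eq_0\<close>)
  finally show ?thesis .
qed

end

context cset begin

lemma l_pos: "l \<ge> 1"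
proof -
  have "p \<ge> 2" using pm(1) prime_ge_2_nat by blast
  have "p ^ m \<ge> p ^ 1" using pm(2) \<open>p \<ge> 2\<close> by (intro power_increasing) auto
  hence "q \<ge> 2" using pm(3) \<open>p \<ge> 2\<close> by simp
  thus ?thesis using ql by simp
qed

definition Rr :: "int set" where "Rr = {- int l ..< - int l + int n}"
definition Pz :: "int set" where "Pz = {- int l .. int l}"
definition Zz :: "int set" where "Zz = {int l + 1 .. 3 * int l + 1}"
definition lin :: "'a \<Rightarrow> 'a poly" where "lin c = [:- c, 1:]"
definition prodR :: "int set \<Rightarrow> 'a poly" where "prodR S = (\<Prod>i\<in>S. lin (w i))"

lemma Rr_split: "Rr = Pz \<union> Zz" "Pz \<inter> Zz = {}"
  unfolding Rr_def Pz_def Zz_def using nl by auto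

lemma fin_sets: "finite Rr" "finite Pz" "finite Zz"
  unfolding Rr_def Pz_def Zz_def by auto

lemma card_Rr: "card Rr = n" unfolding Rr_def by simp
lemma card_Pz: "card Pz = k" unfolding Pz_def using kl by simp
lemma card_Zz: "card Zz = k" unfolding Zz_def using kl by simp

lemma not_dvd_small: "0 < (x::int) \<Longrightarrow> x < int n \<Longrightarrow> \<not> int n dvd x"
  using zdvd_imp_le by fastforce

lemma dvd_small_eq: "\<bar>a - b\<bar> < int n \<Longrightarrow> int n dvd (a - b) \<Longrightarrow> a = b"
proof (rule ccontr)
  assume h: "\<bar>a - b\<bar> < int n" "int n dvd (a - b)" "a \<noteq> b"
  show False
  proof (cases "a > b")
    case True thus False using not_dvd_small[of "a - b"] h by auto
  next
    case False
    hence "0 < b - a" using h by auto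
    moreover have "int n dvd (b - a)" using h(2) by (metis dvd_minus_iff minus_diff_eq)
    ultimately show False using not_dvd_small[of "b - a"] h by auto
  qed
qed

lemma inj_w_Rr: "inj_on w Rr"
proof (rule inj_onI)
  fix a b assume "a \<in> Rr" "b \<in> Rr" "w a = w b"
  hence "\<bar>a - b\<bar> < int n" "int n dvd (a - b)" unfolding Rr_def by (auto simp: w_eq)
  thus "a = b" by (rule dvd_small_eq)
qed

lemma inj_w_sub: "S \<subseteq> Rr \<Longrightarrow> inj_on w S" using inj_w_Rr inj_on_subset by blast

lemma poly_xn1: "poly (xn1 n) (w i) = 0"
proof -
  have "w i ^ n = 1" by (simp add: w_pow w_eq1)
  thus ?thesis by (simp add: xn1_def poly_monom)
qed

lemma poly_mod_xn1: "poly (x mod xn1 n) (w i) = poly x (w i)"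
proof -
  have "poly x (w i) = poly (x div xn1 n) (w i) * poly (xn1 n) (w i) + poly (x mod xn1 n) (w i)"
    by (metis div_mult_mod_eq poly_add poly_mult)
  thus ?thesis by (simp add: poly_xn1)
qed

lemma lin_nz: "lin c \<noteq> 0" unfolding lin_def by simp
lemma degree_lin: "degree (lin c) = 1" unfolding lin_def by simp
lemma poly_lin: "poly (lin c) x = x - c" unfolding lin_def by simp

lemma prodR_nz: "prodR S \<noteq> 0"
  unfolding prodR_def by (cases "finite S") (auto simp: lin_nz)

lemma degree_prodR: "finite S \<Longrightarrow> degree (prodR S) = card S"
  unfolding prodR_def by (subst degree_prod_eq_sum_degree) (auto simp: lin_nz degree_lin)

lemma lead_prodR: "lead_coeff (prodR S) = 1"
  unfolding prodR_def lead_coeff_prod by (simp add: lin_def)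

lemma poly_prodR: "poly (prodR S) x = (\<Prod>i\<in>S. x - w i)"
  unfolding prodR_def poly_prod by (simp add: poly_lin)

lemma poly_prodR_0: "finite S \<Longrightarrow> i \<in> S \<Longrightarrow> poly (prodR S) (w i) = 0"
  unfolding poly_prodR by (rule prod_zero) auto

lemma xn1_eq: "xn1 n = prodR Rr"
proof (rule poly_eqI_degree_lead_coeff[where n = n and A = "w ` Rr"])
  have nz: "n > 0" using n_pos .
  show "coeff (xn1 n) n = coeff (prodR Rr) n"
    using lead_prodR[of Rr] degree_prodR[OF fin_sets(1)] card_Rr nz
    by (simp add: xn1_def)
  show "n \<le> card (w ` Rr)" using card_image[OF inj_w_Rr] card_Rr by simp
  show "degree (xn1 n) \<le> n" unfolding xn1_def
    by (intro degree_diff_le) (auto simp: degree_monom_le)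
  show "degree (prodR Rr) \<le> n" using degree_prodR[OF fin_sets(1)] card_Rr by simp
  fix z assume "z \<in> w ` Rr"
  then obtain i where "i \<in> Rr" "z = w i" by auto
  thus "poly (xn1 n) z = poly (prodR Rr) z"
    using poly_xn1 poly_prodR_0[OF fin_sets(1)] by simp
qed

lemma xn1_nz: "xn1 n \<noteq> (0::'a poly)" using xn1_eq prodR_nz by simp
lemma degree_xn1: "degree (xn1 n :: 'a poly) = n"
  using xn1_eq degree_prodR[OF fin_sets(1)] card_Rr by simp

definition g :: "'a poly" where "g = prodR Zz"

lemma xn1_split: "xn1 n = prodR Pz * g"
  unfolding xn1_eq g_def prodR_def using Rr_split fin_sets
  by (simp add: prod.union_disjoint)

lemma g_nz: "g \<noteq> 0" unfolding g_def by (rule prodR_nz)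
lemma degree_g: "degree g = k" unfolding g_def using degree_prodR[OF fin_sets(3)] card_Zz by simp
lemma poly_g: "i \<in> Zz \<Longrightarrow> poly g (w i) = 0" unfolding g_def using poly_prodR_0[OF fin_sets(3)] by simp

definition Pnat :: "nat set" where "Pnat = (\<lambda>i. nat (i mod int n)) ` Pz"

lemma inj_Pnat: "inj_on (\<lambda>i. nat (i mod int n)) Pz"
proof (rule inj_onI)
  fix a b assume ab: "a \<in> Pz" "b \<in> Pz" "nat (a mod int n) = nat (b mod int n)"
  hence "a mod int n = b mod int n" using n_pos by (simp add: eq_nat_nat_iff)
  hence "int n dvd (a - b)" by (simp add: mod_eq_dvd_iff)
  moreover have "\<bar>a - b\<bar> < int n" using ab nl unfolding Pz_def by auto
  ultimately show "a = b" using dvd_small_eq by blast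
qed

lemma th_Pnat: "\<theta> ^ nat (i mod int n) = w i"
proof -
  have nn: "0 \<le> i mod int n" using n_pos by simp
  have "\<theta> ^ nat (i mod int n) = w (int (nat (i mod int n)))" by (simp only: w_nat)
  also have "int (nat (i mod int n)) = i mod int n" using nn by simp
  finally show ?thesis using w_mod[of i] by simp
qed

lemma fP_eq: "fP \<theta> Pnat = prodR Pz"
  unfolding fP_def Pnat_def prodR_def
  by (subst prod.reindex[OF inj_Pnat]) (simp add: th_Pnat lin_def)

lemma xn1_div: "xn1 n div fP \<theta> Pnat = g"
  unfolding fP_eq xn1_split using prodR_nz by simp

lemma prodR_dvd:
  assumes "finite S" "S \<subseteq> Rr" "\<And>i. i \<in> S \<Longrightarrow> poly c (w i) = 0"
  shows "prodR S dvd c"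
  using assms
proof (induction S rule: finite_induct)
  case empty
  then show ?case by (simp add: prodR_def)
next
  case (insert j S)
  have "prodR S dvd c" using insert by auto
  then obtain d where d: "c = prodR S * d" by (auto simp: dvd_def)
  have "poly (prodR S) (w j) \<noteq> 0"
  proof
    assume "poly (prodR S) (w j) = 0"
    then obtain i where "i \<in> S" "w j - w i = 0" unfolding poly_prodR using insert(1)
      by (auto simp: prod_zero_iff)
    hence "j = i" using inj_w_Rr insert(4) by (auto dest: inj_onD)
    thus False using insert(2) \<open>i \<in> S\<close> by simp
  qed
  moreover have "poly c (w j) = 0" using insert by auto
  ultimately have "poly d (w j) = 0" using d by simp
  hence "lin (w j) dvd d" by (simp add: poly_eq_0_iff_dvd lin_def)
  hence "prodR S * lin (w j) dvd c" using d by simp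
  thus ?case unfolding prodR_def using insert(1,2) by (simp add: mult.commute)
qed

lemma fr_lin: "fr (lin c) = lin (c ^ q)"
  unfolding lin_def fr_pCons by (simp add: frob_minus fr_0)

lemma over_g: "over_Fq q g"
proof -
  have "fr g = (\<Prod>i\<in>Zz. lin (w i ^ q))" unfolding g_def prodR_def fr_prod fr_lin ..
  also have "\<dots> = (\<Prod>i\<in>Zz. lin (w (int n - i)))"
  proof (rule prod.cong[OF refl])
    fix i
    have "w (- i) = w (int n - i)" unfolding w_eq by simp
    thus "lin (w i ^ q) = lin (w (int n - i))" unfolding w_frob by simp
  qed
  also have "\<dots> = (\<Prod>i\<in>Zz. lin (w i))"
    by (rule prod.reindex_bij_witness[of _ "\<lambda>i. int n - i" "\<lambda>i. int n - i"])
       (use nl in \<open>auto simp: Zz_def\<close>)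
  finally show ?thesis unfolding over_iff g_def prodR_def .
qed

lemma over_xn1: "over_Fq q (xn1 n :: 'a poly)"
  unfolding xn1_def by (intro over_diff over_monom over_1) simp

end

context cset begin

definition Cc :: "'a poly set" where "Cc = CP q n \<theta> Pnat"
definition E :: "'a poly set" where "E = {c \<in> Rn q n. \<forall>i\<in>Zz. poly c (w i) = 0}"
definition Aset :: "'a poly set" where "Aset = {a. over_Fq q a \<and> degree a < k}"

lemma n_2k: "n = 2 * k" using nl kl by simp
lemma k_pos: "k > 0" using kl by simp

lemma E_factor:
  assumes "c \<in> E" shows "\<exists>a\<in>Aset. c = a * g"
proof -
  have cR: "over_Fq q c" "degree c < n" and z: "\<And>i. i \<in> Zz \<Longrightarrow> poly c (w i) = 0"
    using assms unfolding E_def Rn_def by auto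
  have "g dvd c" unfolding g_def
    by (rule prodR_dvd) (use fin_sets Rr_split z in auto)
  define a where "a = c div g"
  have ca: "c = a * g" unfolding a_def using \<open>g dvd c\<close> by simp
  have oa: "over_Fq q a" unfolding a_def using over_divmod[OF cR(1) over_g] by simp
  have "degree a < k"
  proof (cases "a = 0")
    case True thus ?thesis using k_pos by simp
  next
    case False
    hence "degree c = degree a + k" using ca g_nz degree_g by (simp add: degree_mult_eq)
    thus ?thesis using cR(2) n_2k by simp
  qed
  thus ?thesis using ca oa unfolding Aset_def by blast
qed

lemma mult_g_E: "a \<in> Aset \<Longrightarrow> a * g \<in> E"
proof -
  assume "a \<in> Aset"
  hence oa: "over_Fq q a" and da: "degree a < k" unfolding Aset_def by auto
  have "degree (a * g) < n"
  proof (cases "a = 0")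
    case True thus ?thesis using n_pos by simp
  next
    case False
    thus ?thesis using g_nz degree_g da n_2k by (simp add: degree_mult_eq)
  qed
  moreover have "over_Fq q (a * g)" by (rule over_mult[OF oa over_g])
  moreover have "\<forall>i\<in>Zz. poly (a * g) (w i) = 0" using poly_g by simp
  ultimately show ?thesis unfolding E_def Rn_def by auto
qed

lemma E_img: "E = (\<lambda>a. a * g) ` Aset"
  using E_factor mult_g_E by blast

lemma Cc_eq_E: "Cc = E"
proof
  show "Cc \<subseteq> E"
  proof
    fix c assume "c \<in> Cc"
    then obtain a where c: "c = (a * g) mod xn1 n" and oa: "over_Fq q a"
      unfolding Cc_def CP_def xn1_div by auto
    have "over_Fq q c" unfolding c using over_divmod[OF over_mult[OF oa over_g] over_xn1] by simp
    moreover have "degree c < n"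
    proof (cases "c = 0")
      case True thus ?thesis using n_pos by simp
    next
      case False
      thus ?thesis unfolding c using degree_mod_less'[OF xn1_nz] degree_xn1 c by simp
    qed
    moreover have "\<forall>i\<in>Zz. poly c (w i) = 0" unfolding c poly_mod_xn1 using poly_g by simp
    ultimately show "c \<in> E" unfolding E_def Rn_def by auto
  qed
next
  show "E \<subseteq> Cc"
  proof
    fix c assume cE: "c \<in> E"
    then obtain a where a: "a \<in> Aset" "c = a * g" using E_factor by blast
    have "degree c < n" using cE unfolding E_def Rn_def by auto
    hence "c = (a * g) mod xn1 n" using a(2) degree_xn1 by (simp add: mod_poly_less)
    moreover have "over_Fq q a" using a(1) unfolding Aset_def by auto
    ultimately show "c \<in> Cc" unfolding Cc_def CP_def xn1_div by auto
  qed
qed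

definition Gs :: "'a poly set" where
  "Gs = {c \<in> Rn q n. \<exists>a :: 'a poly. degree a < k \<and>
                   (\<forall>j<n. coeff c j = \<theta> ^ (j * l) * poly a (inverse \<theta> ^ j))}"

lemma G_coeff:
  assumes "degree (a::'a poly) < k"
  shows "\<theta> ^ (j * l) * poly a (inverse \<theta> ^ j) = (\<Sum>m<k. coeff a m * w (int j * (int l - int m)))"
proof -
  have t1: "\<theta> ^ (j * l) = w (int j * int l)" using w_nat[of "j * l"] by simp
  have "inverse \<theta> = w (-1)" using w_minus[of 1] w_nat[of 1] by simp
  hence t2: "inverse \<theta> ^ j = w (- int j)" by (simp add: w_pow)
  have "\<theta> ^ (j * l) * poly a (inverse \<theta> ^ j) = w (int j * int l) * (\<Sum>m<k. coeff a m * w (- int j) ^ m)"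
    unfolding t1 t2 poly_sum_n[OF assms] ..
  also have "\<dots> = (\<Sum>m<k. coeff a m * w (int j * (int l - int m)))"
    unfolding sum_distrib_left
  proof (rule sum.cong[OF refl])
    fix m
    have "w (int j * int l) * w (- int j) ^ m = w (int j * (int l - int m))"
      unfolding w_pow w_add[symmetric] by (simp add: algebra_simps)
    thus "w (int j * int l) * (coeff a m * w (- int j) ^ m) = coeff a m * w (int j * (int l - int m))"
      by (simp add: algebra_simps)
  qed
  finally show ?thesis .
qed

lemma dft_fwd: "degree (c::'a poly) < n \<Longrightarrow> poly c (w t) = (\<Sum>j<n. coeff c j * w (t * int j))"
  by (simp add: poly_sum_n w_pow)

lemma Gs_sub_E: "Gs \<subseteq> E"
proof
  fix c assume "c \<in> Gs"
  then obtain a where cR: "c \<in> Rn q n" and da: "degree a < k"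
    and ca: "\<And>j. j < n \<Longrightarrow> coeff c j = (\<Sum>m<k. coeff a m * w (int j * (int l - int m)))"
    unfolding Gs_def using G_coeff by auto
  have dc: "degree c < n" using cR unfolding Rn_def by auto
  have "poly c (w i) = 0" if i: "i \<in> Zz" for i
  proof -
    have "poly c (w i) = (\<Sum>j<n. (\<Sum>m<k. coeff a m * w (int j * (int l - int m))) * w (i * int j))"
      unfolding dft_fwd[OF dc] by (rule sum.cong) (auto simp: ca)
    also have "\<dots> = (\<Sum>j<n. \<Sum>m<k. coeff a m * w ((int l - int m + i) * int j))"
      unfolding sum_distrib_right
      by (intro sum.cong refl) (simp add: mult.assoc w_add[symmetric] algebra_simps)
    also have "\<dots> = (\<Sum>m<k. coeff a m * (\<Sum>j<n. w ((int l - int m + i) * int j)))"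
      by (subst sum.swap) (simp add: sum_distrib_left)
    also have "\<dots> = 0"
    proof (rule sum.neutral, rule ballI)
      fix m assume "m \<in> {..<k}"
      hence "0 < int l - int m + i" "int l - int m + i < int n" using i kl nl unfolding Zz_def by auto
      hence "\<not> int n dvd (int l - int m + i)" by (rule not_dvd_small)
      thus "coeff a m * (\<Sum>j<n. w ((int l - int m + i) * int j)) = 0" by (simp add: sum_w)
    qed
    finally show ?thesis .
  qed
  thus "c \<in> E" using cR unfolding E_def by auto
qed

lemma dft_inv:
  assumes "degree (c::'a poly) < n" "j0 < n"
  shows "coeff c j0 = (\<Sum>s\<in>Rr. poly c (w s) * w (- (s * int j0)))"
proof -
  have "(\<Sum>s\<in>Rr. poly c (w s) * w (- (s * int j0)))
      = (\<Sum>s\<in>Rr. \<Sum>t<n. coeff c t * w (s * (int t - int j0)))"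
    unfolding dft_fwd[OF assms(1)] sum_distrib_right
    by (intro sum.cong refl) (simp add: mult.assoc w_add[symmetric] algebra_simps)
  also have "\<dots> = (\<Sum>t<n. coeff c t * (\<Sum>s\<in>Rr. w (s * (int t - int j0))))"
    by (subst sum.swap) (simp add: sum_distrib_left)
  also have "\<dots> = (\<Sum>t<n. if t = j0 then coeff c t else 0)"
  proof (rule sum.cong[OF refl])
    fix t assume "t \<in> {..<n}"
    hence "int n dvd (int t - int j0) \<longleftrightarrow> t = j0"
      using assms(2) dvd_small_eq[of "int t" "int j0"] by auto
    thus "coeff c t * (\<Sum>s\<in>Rr. w (s * (int t - int j0))) = (if t = j0 then coeff c t else 0)"
      unfolding Rr_def sum_w_int of_nat_n by auto
  qed
  also have "\<dots> = coeff c j0" using assms(2) by simp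
  finally show ?thesis ..
qed

lemma E_sub_Gs: "E \<subseteq> Gs"
proof
  fix c assume cE: "c \<in> E"
  hence cR: "c \<in> Rn q n" and dc: "degree c < n" and z: "\<And>i. i \<in> Zz \<Longrightarrow> poly c (w i) = 0"
    unfolding E_def Rn_def by auto
  define b where "b m = poly c (w (int m - int l))" for m
  define a where "a = (\<Sum>m<k. monom (b m) m)"
  have coa: "coeff a m = (if m < k then b m else 0)" for m
    unfolding a_def by (simp add: coeff_sum coeff_monom)
  have "degree a \<le> k - 1" by (rule degree_le) (use coa in auto)
  hence da: "degree a < k" using k_pos by simp
  have "coeff c j = \<theta> ^ (j * l) * poly a (inverse \<theta> ^ j)" if j: "j < n" for j
  proof -
    have "coeff c j = (\<Sum>s\<in>Rr. poly c (w s) * w (- (s * int j)))" by (rule dft_inv[OF dc j])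
    also have "\<dots> = (\<Sum>s\<in>Pz. poly c (w s) * w (- (s * int j)))"
      unfolding Rr_split(1) using fin_sets Rr_split(2) z by (simp add: sum.union_disjoint)
    also have "\<dots> = (\<Sum>m<k. b m * w (int j * (int l - int m)))"
      unfolding b_def
      by (rule sum.reindex_bij_witness[of _ "\<lambda>m. int m - int l" "\<lambda>s. nat (s + int l)"])
         (use kl in \<open>auto simp: Pz_def algebra_simps\<close>)
    also have "\<dots> = (\<Sum>m<k. coeff a m * w (int j * (int l - int m)))"
      by (rule sum.cong) (auto simp: coa)
    also have "\<dots> = \<theta> ^ (j * l) * poly a (inverse \<theta> ^ j)" by (rule G_coeff[OF da, symmetric])
    finally show ?thesis .
  qed
  thus "c \<in> Gs" using cR da unfolding Gs_def by auto
qed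

lemma Cc_eq_Gs: "Cc = Gs" using Cc_eq_E Gs_sub_E E_sub_Gs by blast

end

context cset begin

abbreviation Phi :: "'a poly \<Rightarrow> 'a poly" where "Phi \<equiv> phi n \<theta> (n - 1) k"

definition Ep :: "'a poly set" where "Ep = {v \<in> Rn q n. \<forall>i\<in>Pz. poly v (w i) = 0}"

lemma inv_thk: "inverse (\<theta> ^ k) = -1"
  using w_k w_nat[of k] by simp

lemma poly_Phi: "poly (Phi c) (w i) = poly c (w (int k - i))"
proof -
  have "poly (Phi c) (w i) = poly c (- (w i ^ (n - 1)))"
    unfolding phi_def poly_mod_xn1 poly_pcompose inv_thk by (simp add: poly_monom)
  also have "- (w i ^ (n - 1)) = w (int k + i * int (n - 1))"
    by (simp add: w_add w_pow w_k)
  also have "\<dots> = w (int k - i)"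
  proof -
    have "int (n - 1) = int n - 1" using n_pos by simp
    hence "(int k + i * int (n - 1)) - (int k - i) = int n * i" by (simp add: algebra_simps)
    thus ?thesis unfolding w_eq by simp
  qed
  finally show ?thesis .
qed

lemma kP: "i \<in> Pz \<Longrightarrow> int k - i \<in> Zz" using kl unfolding Pz_def Zz_def by auto
lemma kZ: "i \<in> Zz \<Longrightarrow> int k - i \<in> Pz" using kl unfolding Pz_def Zz_def by auto
lemma mP: "r < k \<Longrightarrow> int l - int r \<in> Pz" using kl unfolding Pz_def by auto

lemma Rn_D: "c \<in> Rn q n \<Longrightarrow> over_Fq q c \<and> degree c < n" unfolding Rn_def by auto

lemma Phi_Rn: "c \<in> Rn q n \<Longrightarrow> Phi c \<in> Rn q n"
proof -
  assume "c \<in> Rn q n"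
  hence oc: "over_Fq q c" using Rn_D by blast
  have om: "over_Fq q (monom (inverse (\<theta> ^ k)) (n - 1))"
    unfolding inv_thk by (rule over_monom) (simp add: frob_minus)
  have "over_Fq q (Phi c)" unfolding phi_def
    using over_divmod[OF over_pcompose[OF oc om] over_xn1] by simp
  moreover have "degree (Phi c) < n"
  proof (cases "Phi c = 0")
    case True thus ?thesis using n_pos by simp
  next
    case False
    thus ?thesis using degree_mod_less'[OF xn1_nz] degree_xn1 unfolding phi_def by auto
  qed
  ultimately show ?thesis unfolding Rn_def by auto
qed

lemma Phi_img: "Phi ` Cc = Ep"
proof
  show "Phi ` Cc \<subseteq> Ep"
  proof
    fix v assume "v \<in> Phi ` Cc"
    then obtain c where c: "c \<in> E" "v = Phi c" using Cc_eq_E by auto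
    have "v \<in> Rn q n" using c Phi_Rn unfolding E_def by auto
    moreover have "poly v (w i) = 0" if "i \<in> Pz" for i
    proof -
      have "poly v (w i) = poly c (w (int k - i))" unfolding c(2) by (rule poly_Phi)
      thus ?thesis using c(1) kP[OF that] unfolding E_def by auto
    qed
    ultimately show "v \<in> Ep" unfolding Ep_def by auto
  qed
next
  show "Ep \<subseteq> Phi ` Cc"
  proof
    fix v assume v: "v \<in> Ep"
    hence vR: "v \<in> Rn q n" unfolding Ep_def by auto
    define c where "c = Phi v"
    have cR: "c \<in> Rn q n" unfolding c_def using Phi_Rn vR by blast
    have "poly c (w i) = 0" if "i \<in> Zz" for i
      using v kZ[OF that] unfolding c_def poly_Phi Ep_def by auto
    hence cE: "c \<in> E" using cR unfolding E_def by auto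
    have "Phi c = v"
    proof (rule poly_eqI_degree[where A = "w ` Rr"])
      fix x assume "x \<in> w ` Rr"
      then obtain i where x: "x = w i" by auto
      have "poly (Phi c) (w i) = poly c (w (int k - i))" by (rule poly_Phi)
      also have "\<dots> = poly v (w (int k - (int k - i)))" unfolding c_def by (rule poly_Phi)
      finally show "poly (Phi c) x = poly v x" using x by simp
    next
      show "degree (Phi c) < card (w ` Rr)" using Phi_Rn[OF cR] Rn_D card_image[OF inj_w_Rr] card_Rr by auto
      show "degree v < card (w ` Rr)" using vR Rn_D card_image[OF inj_w_Rr] card_Rr by auto
    qed
    thus "v \<in> Phi ` Cc" using cE Cc_eq_E by auto
  qed
qed

lemma inner_G:
  assumes "degree (a::'a poly) < k" "\<And>j. j < n \<Longrightarrow> coeff c j = \<theta> ^ (j * l) * poly a (inverse \<theta> ^ j)"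
    and "degree v < n"
  shows "(\<Sum>j<n. coeff c j * coeff v j) = (\<Sum>m<k. coeff a m * poly v (w (int l - int m)))"
proof -
  have "(\<Sum>j<n. coeff c j * coeff v j) = (\<Sum>j<n. \<Sum>m<k. coeff a m * (coeff v j * w ((int l - int m) * int j)))"
    unfolding sum_distrib_right
    by (intro sum.cong refl) (simp add: assms(2) G_coeff[OF assms(1)] sum_distrib_right sum_distrib_left algebra_simps mult_ac)
  also have "\<dots> = (\<Sum>m<k. coeff a m * poly v (w (int l - int m)))"
    by (subst sum.swap) (simp add: sum_distrib_left dft_fwd[OF assms(3)])
  finally show ?thesis .
qed

lemma Ep_sub_dual: "Ep \<subseteq> dual q n Cc"
proof
  fix v assume v: "v \<in> Ep"
  hence vR: "v \<in> Rn q n" and z: "\<And>i. i \<in> Pz \<Longrightarrow> poly v (w i) = 0" unfolding Ep_def by auto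
  have "(\<Sum>i<n. coeff c i * coeff v i) = 0" if "c \<in> Cc" for c
  proof -
    from that obtain a where a: "degree a < k" "\<And>j. j < n \<Longrightarrow> coeff c j = \<theta> ^ (j * l) * poly a (inverse \<theta> ^ j)"
      unfolding Cc_eq_Gs Gs_def by auto
    have "(\<Sum>i<n. coeff c i * coeff v i) = (\<Sum>m<k. coeff a m * poly v (w (int l - int m)))"
      by (rule inner_G[OF a conjunct2[OF Rn_D[OF vR]]])
    also have "\<dots> = 0" by (rule sum.neutral) (use z mP in auto)
    finally show ?thesis .
  qed
  thus "v \<in> dual q n Cc" using vR unfolding dual_def by auto
qed

lemma trace_nz: "\<exists>x::'a. x + x ^ q \<noteq> 0"
proof (rule ccontr)
  assume "\<not> ?thesis"
  hence h: "\<And>x::'a. x + x ^ q = 0" by blast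
  define P :: "'a poly" where "P = monom 1 q + monom 1 1"
  have q2: "q \<ge> 2" using ql l_pos by simp
  have cq: "coeff P q = 1" unfolding P_def using q2 by (simp add: coeff_monom)
  hence Pnz: "P \<noteq> 0" by auto
  have dP: "degree P = q"
  proof -
    have "degree P \<le> q" unfolding P_def
      by (intro degree_add_le) (use q2 in \<open>auto simp: degree_monom_le order_trans[OF degree_monom_le]\<close>)
    moreover have "q \<le> degree P" using cq by (intro le_degree) simp
    ultimately show ?thesis by simp
  qed
  have "{x. poly P x = 0} = UNIV" unfolding P_def using h by (auto simp: poly_monom add.commute)
  hence "card (UNIV :: 'a set) \<le> q" using card_poly_roots_bound[OF Pnz] dP by simp
  moreover have "q < q ^ 2" using q2 by (simp add: power2_eq_square)
  ultimately show False using card by simp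
qed

lemma dual_sub_Ep: "dual q n Cc \<subseteq> Ep"
proof
  fix v assume v: "v \<in> dual q n Cc"
  hence vR: "v \<in> Rn q n" and orth: "\<And>c. c \<in> Cc \<Longrightarrow> (\<Sum>i<n. coeff c i * coeff v i) = 0"
    unfolding dual_def by auto
  have ov: "over_Fq q v" and dv: "degree v < n" using Rn_D[OF vR] by auto
  have "poly v (w t) = 0" if t: "t \<in> Pz" for t
  proof (rule ccontr)
    assume W: "poly v (w t) \<noteq> 0"
    define W0 where "W0 = poly v (w t)"
    have key: "\<beta> * W0 + (\<beta> * W0) ^ q = 0" for \<beta>
    proof -
      define cf where "cf j = \<beta> * w (t * int j) + \<beta> ^ q * w (- t * int j)" for j
      define c where "c = (\<Sum>j<n. monom (cf j) j)"
      have coc: "coeff c j = (if j < n then cf j else 0)" for j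
        unfolding c_def by (simp add: coeff_sum coeff_monom)
      have "degree c \<le> n - 1" by (rule degree_le) (use coc in auto)
      hence dc: "degree c < n" using n_pos by simp
      have cfq: "cf j ^ q = cf j" for j
      proof -
        have "cf j ^ q = \<beta> ^ q * w (t * int j) ^ q + (\<beta> ^ q) ^ q * w (- t * int j) ^ q"
          unfolding cf_def by (simp add: frob_add power_mult_distrib)
        also have "(\<beta> ^ q) ^ q = \<beta>" using pow_card[of \<beta>] by (simp add: power_mult[symmetric] power2_eq_square)
        also have "w (t * int j) ^ q = w (- t * int j)" unfolding w_frob by simp
        also have "w (- t * int j) ^ q = w (t * int j)" unfolding w_frob by simp
        finally show ?thesis unfolding cf_def by (simp add: add.commute)
      qed
      have oc: "over_Fq q c" unfolding over_Fq_def Fq_def using coc cfq q_pos by auto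
      define a where "a = monom \<beta> (nat (int l - t)) + monom (\<beta> ^ q) (nat (int l + t))"
      have tl: "- int l \<le> t" "t \<le> int l" using t unfolding Pz_def by auto
      have da: "degree a < k"
      proof -
        have "degree a \<le> 2 * l" unfolding a_def
          by (intro degree_add_le order_trans[OF degree_monom_le]) (use tl in auto)
        thus ?thesis using kl by simp
      qed
      have "coeff c j = \<theta> ^ (j * l) * poly a (inverse \<theta> ^ j)" if j: "j < n" for j
      proof -
        have "inverse \<theta> = w (-1)" using w_minus[of 1] w_nat[of 1] by simp
        hence t2: "inverse \<theta> ^ j = w (- int j)" by (simp add: w_pow)
        have t1: "\<theta> ^ (j * l) = w (int j * int l)" using w_nat[of "j * l"] by simp
        have e1: "w (int j * int l) * w (- int j) ^ nat (int l - t) = w (t * int j)"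
          unfolding w_pow w_add[symmetric] using tl by (simp add: algebra_simps)
        have e2: "w (int j * int l) * w (- int j) ^ nat (int l + t) = w (- t * int j)"
          unfolding w_pow w_add[symmetric] using tl by (simp add: algebra_simps)
        have "w (int j * int l) * poly a (w (- int j))
           = \<beta> * (w (int j * int l) * w (- int j) ^ nat (int l - t))
             + \<beta> ^ q * (w (int j * int l) * w (- int j) ^ nat (int l + t))"
          unfolding a_def by (simp add: poly_monom distrib_left mult_ac)
        also have "\<dots> = cf j" unfolding e1 e2 cf_def ..
        finally show ?thesis unfolding t1 t2 using j coc by simp
      qed
      hence "c \<in> Gs" using oc dc da unfolding Gs_def Rn_def by auto
      hence "(\<Sum>i<n. coeff c i * coeff v i) = 0" using orth Cc_eq_Gs by auto
      moreover have "(\<Sum>i<n. coeff c i * coeff v i) = \<beta> * poly v (w t) + \<beta> ^ q * poly v (w (- t))"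
        unfolding dft_fwd[OF dv] coc cf_def
        by (simp add: sum_distrib_left sum.distrib algebra_simps)
      moreover have "poly v (w (- t)) = W0 ^ q" unfolding W0_def poly_frob[OF ov] w_frob ..
      ultimately show ?thesis unfolding W0_def by (simp add: power_mult_distrib)
    qed
    obtain x :: 'a where x: "x + x ^ q \<noteq> 0" using trace_nz by blast
    have "(x / W0) * W0 + ((x / W0) * W0) ^ q = 0" by (rule key)
    hence "x + x ^ q = 0" using W unfolding W0_def by simp
    thus False using x by simp
  qed
  thus "v \<in> Ep" using vR unfolding Ep_def by auto
qed

lemma dual_eq: "dual q n Cc = Ep" using Ep_sub_dual dual_sub_Ep by blast

end

context cset begin

lemma roots_le: "(P::'a poly) \<noteq> 0 \<Longrightarrow> degree P \<le> d \<Longrightarrow> card {x. poly P x = 0} \<le> d"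
  using card_poly_roots_bound[of P] by simp

lemma card_Fq: "card (Fq q :: 'a set) = q"
proof (rule antisym)
  have q2: "q \<ge> 2" using ql l_pos by simp
  define P :: "'a poly" where "P = monom 1 q - monom 1 1"
  have cq: "coeff P q = 1" unfolding P_def using q2 by (simp add: coeff_monom)
  hence Pnz: "P \<noteq> 0" by auto
  have dP: "degree P \<le> q" unfolding P_def
    by (intro degree_diff_le) (use q2 in \<open>auto intro: order_trans[OF degree_monom_le]\<close>)
  have "Fq q \<subseteq> {x::'a. poly P x = 0}" unfolding P_def Fq_def by (auto simp: poly_monom)
  hence "card (Fq q :: 'a set) \<le> card {x::'a. poly P x = 0}" by (intro card_mono) auto
  also have "\<dots> \<le> q" by (rule roots_le[OF Pnz dP])
  finally show "card (Fq q :: 'a set) \<le> q" .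
next
  define F where "F = (Fq q :: 'a set) - {0}"
  have finF: "finite F" by simp
  have norm: "x ^ (q + 1) \<in> F" if "x \<noteq> 0" for x :: 'a
  proof -
    have "(x ^ (q + 1)) ^ q = x ^ (q ^ 2) * x ^ q"
      by (simp add: power_mult[symmetric] power_add[symmetric] power2_eq_square algebra_simps)
    also have "\<dots> = x ^ (q + 1)" using pow_card[of x] by simp
    finally show ?thesis unfolding F_def Fq_def using that by simp
  qed
  have sub: "UNIV - {0} \<subseteq> (\<Union>y\<in>F. {x::'a. x ^ (q + 1) = y})" using norm by auto
  have fib: "card {x::'a. x ^ (q + 1) = y} \<le> q + 1" for y
  proof -
    define P :: "'a poly" where "P = monom 1 (q + 1) - [:y:]"
    have "coeff P (q + 1) = 1" unfolding P_def by (simp add: coeff_monom)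
    hence Pnz: "P \<noteq> 0" by auto
    have dP: "degree P \<le> q + 1" unfolding P_def
      by (intro degree_diff_le) (auto simp: degree_monom_le)
    have "{x::'a. x ^ (q + 1) = y} = {x. poly P x = 0}" unfolding P_def by (auto simp: poly_monom)
    thus ?thesis using roots_le[OF Pnz dP] by simp
  qed
  have "q ^ 2 - 1 = card (UNIV - {0::'a})" using card by (simp add: card_Diff_singleton)
  also have "\<dots> \<le> card (\<Union>y\<in>F. {x::'a. x ^ (q + 1) = y})" by (intro card_mono sub) auto
  also have "\<dots> \<le> (\<Sum>y\<in>F. card {x::'a. x ^ (q + 1) = y})" by (rule card_UN_le[OF finF])
  also have "\<dots> \<le> (\<Sum>y\<in>F. q + 1)" by (intro sum_mono fib)
  also have "\<dots> = card F * (q + 1)" by simp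
  finally have h: "(q - 1) * (q + 1) \<le> card F * (q + 1)"
    by (simp add: power2_eq_square algebra_simps)
  hence "q - 1 \<le> card F" by (subst (asm) mult_le_cancel2) simp
  moreover have "card F = card (Fq q :: 'a set) - 1" unfolding F_def
    by (subst card_Diff_singleton) (auto simp: Fq_def q_pos)
  moreover have "card (Fq q :: 'a set) \<ge> 1"
  proof -
    have "0 \<in> (Fq q :: 'a set)" using q_pos by (simp add: Fq_def)
    hence "card (Fq q :: 'a set) > 0" by (auto simp: card_gt_0_iff)
    thus ?thesis by simp
  qed
  ultimately show "q \<le> card (Fq q :: 'a set)" by linarith
qed

lemma card_Aset: "card Aset = q ^ k"
proof -
  define h where "h a = restrict (coeff a) {..<k}" for a :: "'a poly"
  have inj: "inj_on h Aset"
  proof (rule inj_onI)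
    fix a b :: "'a poly" assume ab: "a \<in> Aset" "b \<in> Aset" "h a = h b"
    show "a = b"
    proof (rule poly_eqI)
      fix j show "coeff a j = coeff b j"
      proof (cases "j < k")
        case True
        thus ?thesis using fun_cong[OF ab(3), of j] unfolding h_def by simp
      next
        case False
        thus ?thesis using ab(1,2) unfolding Aset_def by (auto simp: coeff_eq_0)
      qed
    qed
  qed
  have img: "h ` Aset = PiE {..<k} (\<lambda>_. Fq q :: 'a set)"
  proof
    show "h ` Aset \<subseteq> PiE {..<k} (\<lambda>_. Fq q :: 'a set)"
    proof
      fix x assume "x \<in> h ` Aset"
      then obtain a :: "'a poly" where a: "a \<in> Aset" "x = h a" by auto
      hence "coeff a \<in> Pi {..<k} (\<lambda>_. Fq q :: 'a set)" unfolding Aset_def over_Fq_def by auto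
      thus "x \<in> PiE {..<k} (\<lambda>_. Fq q :: 'a set)" unfolding a(2) h_def by (simp only: restrict_PiE)
    qed
  next
    show "PiE {..<k} (\<lambda>_. Fq q :: 'a set) \<subseteq> h ` Aset"
    proof
      fix f assume f: "f \<in> PiE {..<k} (\<lambda>_. Fq q :: 'a set)"
      define a :: "'a poly" where "a = (\<Sum>j<k. monom (f j) j)"
      have coa: "coeff a j = (if j < k then f j else 0)" for j
        unfolding a_def by (simp add: coeff_sum coeff_monom)
      have "degree a \<le> k - 1" by (rule degree_le) (use coa in auto)
      hence "degree a < k" using k_pos by simp
      moreover have "over_Fq q a" unfolding over_Fq_def
        using coa f q_pos by (auto simp: Fq_def PiE_iff)
      moreover have "h a = f"
      proof -
        have "h a = restrict f {..<k}" unfolding h_def by (rule restrict_ext) (simp add: coa)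
        thus ?thesis using f by simp
      qed
      ultimately show "f \<in> h ` Aset" unfolding Aset_def by blast
    qed
  qed
  have "card Aset = card (PiE {..<k} (\<lambda>_. Fq q :: 'a set))"
    using card_image[OF inj] img by simp
  also have "\<dots> = q ^ k" by (simp add: card_PiE card_Fq)
  finally show ?thesis .
qed

lemma card_Cc: "card Cc = q ^ k"
proof -
  have "inj_on (\<lambda>a. a * g) Aset" using g_nz by (auto intro: inj_onI)
  hence "card E = card Aset" unfolding E_img by (rule card_image)
  thus ?thesis using card_Aset Cc_eq_E by simp
qed

lemma weight_split: "degree (c::'a poly) < n \<Longrightarrow> weight n c + card {i. i < n \<and> coeff c i = 0} = n"
proof -
  have "{i. i < n \<and> coeff c i \<noteq> 0} \<union> {i. i < n \<and> coeff c i = 0} = {..<n}" by auto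
  moreover have "card ({i. i < n \<and> coeff c i \<noteq> 0} \<union> {i. i < n \<and> coeff c i = 0})
      = card {i. i < n \<and> coeff c i \<noteq> 0} + card {i. i < n \<and> coeff c i = 0}"
    by (rule card_Un_disjoint) auto
  ultimately show ?thesis unfolding weight_def by simp
qed

lemma weight_lower:
  assumes "c \<in> Cc" "c \<noteq> 0" shows "k + 1 \<le> weight n c"
proof -
  from assms(1) obtain a where cR: "c \<in> Rn q n" and da: "degree a < k"
    and ca: "\<And>j. j < n \<Longrightarrow> coeff c j = \<theta> ^ (j * l) * poly a (inverse \<theta> ^ j)"
    unfolding Cc_eq_Gs Gs_def by auto
  have dc: "degree c < n" using cR Rn_D by blast
  have itw: "inverse \<theta> ^ j = w (- int j)" for j
  proof -
    have "inverse \<theta> = w (-1)" using w_minus[of 1] w_nat[of 1] by simp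
    thus ?thesis by (simp add: w_pow)
  qed
  have anz: "a \<noteq> 0"
  proof
    assume "a = 0"
    hence "coeff c j = 0" for j using ca dc by (cases "j < n") (auto simp: coeff_eq_0)
    hence "c = 0" by (simp add: poly_eq_iff)
    thus False using assms(2) by simp
  qed
  let ?Z = "{i. i < n \<and> coeff c i = 0}"
  have "?Z \<subseteq> {i. i < n \<and> poly a (inverse \<theta> ^ i) = 0}" using ca th0 by auto
  have inj: "inj_on (\<lambda>i. inverse \<theta> ^ i) ?Z"
  proof (rule inj_onI)
    fix i j assume ij: "i \<in> ?Z" "j \<in> ?Z" "inverse \<theta> ^ i = inverse \<theta> ^ j"
    hence "int n dvd (int j - int i)" unfolding itw w_eq by (simp add: algebra_simps)
    moreover have "\<bar>int j - int i\<bar> < int n" using ij by auto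
    ultimately show "i = j" using dvd_small_eq by fastforce
  qed
  have "card ?Z = card ((\<lambda>i. inverse \<theta> ^ i) ` ?Z)" using card_image[OF inj] by simp
  also have "\<dots> \<le> card {x. poly a x = 0}"
    by (intro card_mono poly_roots_finite anz) (use ca th0 in auto)
  also have "\<dots> \<le> k - 1" using roots_le[OF anz] da by simp
  finally have "card ?Z \<le> k - 1" .
  thus ?thesis using weight_split[OF dc] n_2k k_pos by linarith
qed

lemma g_in_Cc: "g \<in> Cc"
proof -
  have "1 \<in> Aset" unfolding Aset_def using over_1 k_pos by simp
  from mult_g_E[OF this] show ?thesis using Cc_eq_E by simp
qed

lemma weight_g: "weight n g = k + 1"
proof -
  have "weight n g \<le> card {..k}" unfolding weight_def
    by (intro card_mono) (auto simp: degree_g[symmetric] intro: le_degree)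
  hence "weight n g \<le> k + 1" by simp
  moreover have "k + 1 \<le> weight n g" using weight_lower[OF g_in_Cc g_nz] .
  ultimately show ?thesis by simp
qed

lemma mu_inv: "mu_invariant q n Pnat"
proof -
  have key: "q * nat (i mod int n) mod n = nat ((- i) mod int n)" for i
  proof -
    have nn: "0 \<le> i mod int n" using n_pos by simp
    have "int (q * nat (i mod int n) mod n) = (int q * (i mod int n)) mod int n"
      using nn by (simp add: zmod_int)
    also have "\<dots> = (int q * i) mod int n" by (simp add: mod_mult_right_eq)
    also have "\<dots> = (- i) mod int n"
    proof -
      have "int q * i - (- i) = int n * i" using n_q by (simp add: algebra_simps)
      thus ?thesis by (simp add: mod_eq_dvd_iff)
    qed
    finally show ?thesis by linarith
  qed
  have negP: "i \<in> Pz \<Longrightarrow> - i \<in> Pz" for i unfolding Pz_def by auto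
  show ?thesis unfolding mu_invariant_def Pnat_def image_image key
  proof
    show "(\<lambda>i. nat (- i mod int n)) ` Pz \<subseteq> (\<lambda>i. nat (i mod int n)) ` Pz"
      using negP by auto
    show "(\<lambda>i. nat (i mod int n)) ` Pz \<subseteq> (\<lambda>i. nat (- i mod int n)) ` Pz"
    proof
      fix x assume "x \<in> (\<lambda>i. nat (i mod int n)) ` Pz"
      then obtain i where "i \<in> Pz" "x = nat (i mod int n)" by auto
      thus "x \<in> (\<lambda>i. nat (- i mod int n)) ` Pz"
        using negP by (intro image_eqI[of _ _ "- i"]) auto
    qed
  qed
qed

lemma qk_mod: "(q * k) mod n = k mod n"
proof -
  have "q * k = k + n * (2 * l)" using ql nl kl by (simp add: algebra_simps)
  thus ?thesis by simp
qed

lemma iso: "iso_self_dual q n \<theta> Cc"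
  unfolding iso_self_dual_def
proof (intro exI conjI)
  show "0 < n - 1" using nl by simp
  show "coprime (n - 1) n" by (rule coprime_diff_one_left_nat[OF n_pos])
  show "k < n" using n_2k k_pos by simp
  show "(q * k) mod n = k mod n" by (rule qk_mod)
  show "Phi ` Cc = dual q n Cc" using Phi_img dual_eq by simp
qed

end


theorem theorem4p8:
  fixes q :: nat and \<theta> :: "'a::{field,finite}"
  assumes "\<exists>p m. prime p \<and> 0 < m \<and> q = p ^ m"
    and "card (UNIV :: 'a set) = q ^ 2"
    and "q mod 4 = 1"
    and "\<theta> ^ (q + 1) = 1"
    and "\<forall>k. 0 < k \<and> k < q + 1 \<longrightarrow> \<theta> ^ k \<noteq> 1"
  shows "let n = q + 1; n' = n div 2; l = (n - 2) div 4;
             P = (\<lambda>i. nat (i mod int n)) ` {- int l .. int l};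
             C = CP q n \<theta> P
         in mu_invariant q n P
          \<and> iso_self_dual q n \<theta> C
          \<and> phi n \<theta> (n - 1) n' ` C = dual q n C
          \<and> C = {c \<in> Rn q n. \<exists>a :: 'a poly. degree a < n' \<and>
                   (\<forall>j<n. coeff c j = \<theta> ^ (j * l) * poly a (inverse \<theta> ^ j))}
          \<and> card C = q ^ ((q + 1) div 2)
          \<and> (\<forall>c\<in>C. c \<noteq> 0 \<longrightarrow> (q + 3) div 2 \<le> weight n c)
          \<and> (\<exists>c\<in>C. c \<noteq> 0 \<and> weight n c = (q + 3) div 2)"
proof -
  obtain p m where pm: "prime p" "0 < m" "q = p ^ m" using assms(1) by blast
  define l where "l = (q + 1 - 2) div 4"
  have ql: "q = 4 * l + 1" unfolding l_def using assms(3) by presburger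
  have k2: "(q + 1) div 2 = 2 * l + 1" using ql by simp
  interpret cset q \<theta> p m l "q + 1" "(q + 1) div 2"
  proof
    show "prime p" "0 < m" "q = p ^ m" by (fact pm)+
    show "card (UNIV :: 'a set) = q ^ 2" by (fact assms(2))
    show "q = 4 * l + 1" by (fact ql)
    show "q + 1 = 4 * l + 2" using ql by simp
    show "(q + 1) div 2 = 2 * l + 1" by (fact k2)
    show "\<theta> ^ (q + 1) = 1" by (fact assms(4))
    show "\<And>j. 0 < j \<Longrightarrow> j < q + 1 \<Longrightarrow> \<theta> ^ j \<noteq> 1" using assms(5) by blast
  qed
  have P: "(\<lambda>i. nat (i mod int (q + 1))) ` {- int l .. int l} = Pnat"
    unfolding Pnat_def Pz_def ..
  have C: "CP q (q + 1) \<theta> Pnat = Cc" unfolding Cc_def ..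
  have q3: "(q + 3) div 2 = (q + 1) div 2 + 1" by simp
  show ?thesis
    unfolding Let_def l_def[symmetric] P C
  proof (intro conjI)
    show "mu_invariant q (q + 1) Pnat" by (rule mu_inv)
    show "iso_self_dual q (q + 1) \<theta> Cc" by (rule iso)
    show "phi (q + 1) \<theta> (q + 1 - 1) ((q + 1) div 2) ` Cc = dual q (q + 1) Cc"
      using Phi_img dual_eq by simp
    show "Cc = {c \<in> Rn q (q + 1). \<exists>a :: 'a poly. degree a < (q + 1) div 2 \<and>
                   (\<forall>j<q + 1. coeff c j = \<theta> ^ (j * l) * poly a (inverse \<theta> ^ j))}"
      using Cc_eq_Gs unfolding Gs_def .
    show "card Cc = q ^ ((q + 1) div 2)" by (rule card_Cc)
    show "\<forall>c\<in>Cc. c \<noteq> 0 \<longrightarrow> (q + 3) div 2 \<le> weight (q + 1) c"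
      unfolding q3 using weight_lower by blast
    show "\<exists>c\<in>Cc. c \<noteq> 0 \<and> weight (q + 1) c = (q + 3) div 2"
      unfolding q3 using g_in_Cc g_nz weight_g by blast
  qed
qed


end
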